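(* The binary predicate $\mathrm{Sl}$ on $\mathsf{W}^N_3$ is first-order definable in the structure $(\mathsf{W}^N_3,\prec,\Diamond_1,\Diamond_3)$.
   Context: Words are finite strings over $\mathbb{N}$; $\mathsf{W}_\omega$ is the set of all words, $\Lambda$ the empty word, $AB$ concatenation. For $k\in\mathbb{N}$, $\mathsf{S}_k$ is the set of words all of whose symbols are $\ge k$; $\mathsf{W}_3$ is the set of words all of whose symbols are $\le3$. Given a linear preorder $\precsim$ with $A\sim B$ iff $A\precsim B\wedge B\precsim A$ and $A\prec B$ iff $A\precsim B\wedge\neg B\precsim A$, a finite sequence $(A_1,\dots,A_p)$ is lexicographically not greater than $(B_1,\dots,B_q)$ iff either $p\le q$ and $A_i\sim B_i$ for all $i\le p$, or there is $s<\min(p,q)$ with $A_i\sim B_i$ for $i\le s$ and $A_{s+1}\prec B_{s+1}$. A lexicographically maximal subsequence of a finite sequence is a subsequence that is lexicographically not less than every subsequence. The linear preorder $\precsim$ on $\mathsf{W}_\omega$ is defined by recursion on (largest symbol of $AB$) $-$ (smallest symbol of $AB$): $\Lambda\precsim\Lambda$; if $AB$ is nonempty with minimal symbol $n$, write uniquely $A=A_1n\cdots nA_k$, $B=B_1n\cdots nB_l$ ($k,l\ge1$) with $A_i,B_j\in\mathsf{S}_{n+1}$ (possibly empty); let $C,D$ be lexicographically maximal subsequences of $(A_1,\dots,A_k)$, $(B_1,\dots,B_l)$; then $A\precsim B$ iff $C$ is lexicographically not greater than $D$. The set $\mathsf{NF}$: $\Lambda\in\mathsf{NF}$; a word with minimal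 symbol $n$, written $A_1n\cdots nA_k$ with $k\ge2$, $A_i\in\mathsf{S}_{n+1}$, is in $\mathsf{NF}$ iff $A_k\precsim\dots\precsim A_1$ and all $A_i\in\mathsf{NF}$. Every word is equivalent to exactly one word of $\mathsf{NF}$. For $A\in\mathsf{NF}$, $\Diamond_nA$ is the unique word of $\mathsf{NF}$ equivalent to $An$. $\mathsf{W}^N_3=\mathsf{W}_3\cap\mathsf{NF}$. For $A,B\in\mathsf{W}^N_3$, $\mathrm{Sl}(A,B)$ ("$B$ is a slice of $A$") holds iff $A\neq\Lambda$, $B\neq\Lambda$, and there are $n\ge m\ge1$ and $C_1,\dots,C_n\in\mathsf{S}_1$ with $A=C_10C_20\cdots0C_n$ and $B=C_10C_20\cdots0C_m$. *)

theory Defs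
  imports Main
begin

type_synonym word = "nat list"

definition S :: "nat \<Rightarrow> word set" where
  "S k = {A. \<forall>x\<in>set A. k \<le> x}"

definition W3 :: "word set" where
  "W3 = {A. \<forall>x\<in>set A. x \<le> 3}"

fun splitw :: "nat \<Rightarrow> word \<Rightarrow> word list" where
  "splitw n [] = [[]]"
| "splitw n (x # xs) =
     (if x = n then [] # splitw n xs
      else (let r = splitw n xs in (x # hd r) # tl r))"

fun joinw :: "nat \<Rightarrow> word list \<Rightarrow> word" where
  "joinw n [] = []"
| "joinw n [A] = A"
| "joinw n (A # As) = A @ n # joinw n As"

definition lexle :: "('a \<Rightarrow> 'a \<Rightarrow> bool) \<Rightarrow> 'a list \<Rightarrow> 'a list \<Rightarrow> bool" where
  "lexle R As Bs \<longleftrightarrow>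
     (length As \<le> length Bs \<and>
        (\<forall>i<length As. R (As ! i) (Bs ! i) \<and> R (Bs ! i) (As ! i)))
   \<or> (\<exists>s<min (length As) (length Bs).
        (\<forall>i<s. R (As ! i) (Bs ! i) \<and> R (Bs ! i) (As ! i))
        \<and> R (As ! s) (Bs ! s) \<and> \<not> R (Bs ! s) (As ! s))"

definition lexmax :: "('a \<Rightarrow> 'a \<Rightarrow> bool) \<Rightarrow> 'a list \<Rightarrow> 'a list \<Rightarrow> bool" where
  "lexmax R As Cs \<longleftrightarrow> Cs \<in> set (subseqs As) \<and> (\<forall>Es\<in>set (subseqs As). lexle R Es Cs)"

text \<open>The recursion in the paper is on (max symbol - min symbol) of AB; every recursive
  call is on words whose concatenation is strictly shorter than AB, so we implement it by
  primitive recursion on a fuel parameter that exceeds length (A @ B).\<close>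
primrec le_aux :: "nat \<Rightarrow> word \<Rightarrow> word \<Rightarrow> bool" where
  "le_aux 0 A B = True"
| "le_aux (Suc d) A B =
     (if A @ B = [] then True
      else (let n = Min (set (A @ B));
                C = (SOME C. lexmax (le_aux d) (splitw n A) C);
                D = (SOME D. lexmax (le_aux d) (splitw n B) D)
            in lexle (le_aux d) C D))"

definition wle :: "word \<Rightarrow> word \<Rightarrow> bool" (infix "\<precsim>" 50) where
  "A \<precsim> B \<longleftrightarrow> le_aux (Suc (length (A @ B))) A B"

definition wequiv :: "word \<Rightarrow> word \<Rightarrow> bool" where
  "wequiv A B \<longleftrightarrow> A \<precsim> B \<and> B \<precsim> A"

definition wless :: "word \<Rightarrow> word \<Rightarrow> bool" (infix "\<prec>" 50) where
  "A \<prec> B \<longleftrightarrow> A \<precsim> B \<and> \<not> B \<precsim> A"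

inductive NF :: "word \<Rightarrow> bool" where
  NF_empty: "NF []"
| NF_join: "\<lbrakk> 2 \<le> length As; \<forall>a\<in>set As. a \<in> S (Suc n) \<and> NF a;
             \<forall>i. Suc i < length As \<longrightarrow> (As ! Suc i) \<precsim> (As ! i) \<rbrakk>
            \<Longrightarrow> NF (joinw n As)"

definition Diamond :: "nat \<Rightarrow> word \<Rightarrow> word" where
  "Diamond n A = (THE B. NF B \<and> wequiv B (A @ [n]))"

definition W3N :: "word set" where
  "W3N = W3 \<inter> {A. NF A}"

definition Sl :: "word \<Rightarrow> word \<Rightarrow> bool" where
  "Sl A B \<longleftrightarrow> A \<in> W3N \<and> B \<in> W3N \<and> A \<noteq> [] \<and> B \<noteq> [] \<and>
     (\<exists>n m Cs. 1 \<le> m \<and> m \<le> n \<and> length Cs = n \<and> (\<forall>C\<in>set Cs. C \<in> S 1) \<and>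
        A = joinw 0 Cs \<and> B = joinw 0 (take m Cs))"

datatype fterm = FVar nat | FD1 fterm | FD3 fterm

datatype fform =
    FLess fterm fterm
  | FEq fterm fterm
  | FNot fform
  | FAnd fform fform
  | FEx nat fform

fun tval :: "(nat \<Rightarrow> word) \<Rightarrow> fterm \<Rightarrow> word" where
  "tval e (FVar x) = e x"
| "tval e (FD1 t) = Diamond 1 (tval e t)"
| "tval e (FD3 t) = Diamond 3 (tval e t)"

fun fsat :: "(nat \<Rightarrow> word) \<Rightarrow> fform \<Rightarrow> bool" where
  "fsat e (FLess s t) = (tval e s \<prec> tval e t)"
| "fsat e (FEq s t) = (tval e s = tval e t)"
| "fsat e (FNot \<phi>) = (\<not> fsat e \<phi>)"
| "fsat e (FAnd \<phi> \<psi>) = (fsat e \<phi> \<and> fsat e \<psi>)"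
| "fsat e (FEx x \<phi>) = (\<exists>a\<in>W3N. fsat (e(x := a)) \<phi>)"

end

theory Submission
  imports Defs
begin

fun lx :: "('a \<Rightarrow> 'a \<Rightarrow> bool) \<Rightarrow> 'a list \<Rightarrow> 'a list \<Rightarrow> bool" where
  "lx R [] ys = True"
| "lx R (x#xs) [] = False"
| "lx R (x#xs) (y#ys) = (R x y \<and> \<not> R y x \<or> R x y \<and> R y x \<and> lx R xs ys)"

lemma lexle_Nil[simp]: "lexle R [] ys"
  by (simp add: lexle_def)

lemma lexle_Cons_Nil[simp]: "\<not> lexle R (x#xs) []"
  by (simp add: lexle_def)

lemma lexle_Cons_Cons:
  "lexle R (x#xs) (y#ys) = (R x y \<and> \<not> R y x \<or> R x y \<and> R y x \<and> lexle R xs ys)"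
proof
  assume "lexle R (x#xs) (y#ys)"
  then consider "length xs \<le> length ys" "\<forall>i<Suc (length xs). R ((x#xs) ! i) ((y#ys) ! i) \<and> R ((y#ys) ! i) ((x#xs) ! i)"
    | s where "s < Suc (min (length xs) (length ys))"
      "\<forall>i<s. R ((x#xs) ! i) ((y#ys) ! i) \<and> R ((y#ys) ! i) ((x#xs) ! i)"
      "R ((x#xs) ! s) ((y#ys) ! s)" "\<not> R ((y#ys) ! s) ((x#xs) ! s)"
    unfolding lexle_def by auto
  then show "R x y \<and> \<not> R y x \<or> R x y \<and> R y x \<and> lexle R xs ys"
  proof cases
    case 1
    then show ?thesis unfolding lexle_def
      by (metis Suc_less_eq nth_Cons_0 nth_Cons_Suc zero_less_Suc)
  next
    case 2
    show ?thesis
    proof (cases s)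
      case 0 then show ?thesis using 2 by simp
    next
      case (Suc t)
      have "R x y \<and> R y x" using 2 Suc by (metis nth_Cons_0 zero_less_Suc)
      moreover have "lexle R xs ys" unfolding lexle_def
        using 2 Suc by (intro disjI2 exI[of _ t]) auto
      ultimately show ?thesis by blast
    qed
  qed
next
  assume H: "R x y \<and> \<not> R y x \<or> R x y \<and> R y x \<and> lexle R xs ys"
  show "lexle R (x#xs) (y#ys)"
  proof (cases "R x y \<and> \<not> R y x")
    case True then show ?thesis unfolding lexle_def
      by (intro disjI2 exI[of _ 0]) auto
  next
    case False
    then have xy: "R x y" "R y x" "lexle R xs ys" using H by auto
    from xy(3) consider "length xs \<le> length ys" "\<forall>i<length xs. R (xs ! i) (ys ! i) \<and> R (ys ! i) (xs ! i)"
      | s where "s < min (length xs) (length ys)" "\<forall>i<s. R (xs ! i) (ys ! i) \<and> R (ys ! i) (xs ! i)"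
        "R (xs ! s) (ys ! s)" "\<not> R (ys ! s) (xs ! s)"
      unfolding lexle_def by auto
    then show ?thesis
    proof cases
      case 1
      then show ?thesis unfolding lexle_def using xy
        by (intro disjI1) (auto simp: less_Suc_eq_0_disj)
    next
      case 2
      then show ?thesis unfolding lexle_def using xy
        by (intro disjI2 exI[of _ "Suc s"]) (auto simp: less_Suc_eq_0_disj)
    qed
  qed
qed

lemma lexle_lx: "lexle R xs ys = lx R xs ys"
  by (induction R xs ys rule: lx.induct) (simp_all add: lexle_Cons_Cons)


declare lexle_Cons_Cons[simp]

definition tpre :: "('a \<Rightarrow> 'a \<Rightarrow> bool) \<Rightarrow> 'a set \<Rightarrow> bool" where
  "tpre R U \<longleftrightarrow> (\<forall>x\<in>U. R x x) \<and> (\<forall>x\<in>U. \<forall>y\<in>U. R x y \<or> R y x) \<and>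
     (\<forall>x\<in>U. \<forall>y\<in>U. \<forall>z\<in>U. R x y \<longrightarrow> R y z \<longrightarrow> R x z)"

lemma tpre_trans: "tpre R U \<Longrightarrow> x \<in> U \<Longrightarrow> y \<in> U \<Longrightarrow> z \<in> U \<Longrightarrow> R x y \<Longrightarrow> R y z \<Longrightarrow> R x z"
  unfolding tpre_def by blast

lemma tpre_tot: "tpre R U \<Longrightarrow> x \<in> U \<Longrightarrow> y \<in> U \<Longrightarrow> \<not> R x y \<Longrightarrow> R y x"
  unfolding tpre_def by blast

lemma tpre_refl: "tpre R U \<Longrightarrow> x \<in> U \<Longrightarrow> R x x"
  unfolding tpre_def by blast

lemma tpre_mono: "tpre R U \<Longrightarrow> V \<subseteq> U \<Longrightarrow> tpre R V"
  unfolding tpre_def by blast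

lemma lexle_refl: "\<forall>x\<in>set xs. R x x \<Longrightarrow> lexle R xs xs"
  by (induction xs) auto

lemma lexle_total: "tpre R U \<Longrightarrow> set xs \<subseteq> U \<Longrightarrow> set ys \<subseteq> U \<Longrightarrow> lexle R xs ys \<or> lexle R ys xs"
proof (induction xs arbitrary: ys)
  case Nil then show ?case by simp
next
  case (Cons a xs)
  show ?case
  proof (cases ys)
    case Nil then show ?thesis by simp
  next
    case (Cons b ys')
    have "R a b \<or> R b a" using Cons.prems \<open>ys = b # ys'\<close> unfolding tpre_def by auto
    moreover have "lexle R xs ys' \<or> lexle R ys' xs" using Cons.IH[of ys'] Cons.prems \<open>ys = b # ys'\<close> by auto
    ultimately show ?thesis using \<open>ys = b # ys'\<close> by auto
  qed
qed

lemma lexle_trans: "tpre R U \<Longrightarrow> set xs \<subseteq> U \<Longrightarrow> set ys \<subseteq> U \<Longrightarrow> set zs \<subseteq> U \<Longrightarrow>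
  lexle R xs ys \<Longrightarrow> lexle R ys zs \<Longrightarrow> lexle R xs zs"
proof (induction xs arbitrary: ys zs)
  case Nil then show ?case by simp
next
  case (Cons a xs)
  then obtain b ys' where ys: "ys = b # ys'" by (cases ys) auto
  with Cons obtain c zs' where zs: "zs = c # zs'" by (cases zs) auto
  have abc: "a \<in> U" "b \<in> U" "c \<in> U" using Cons ys zs by auto
  have t: "\<And>x y z. x \<in> U \<Longrightarrow> y \<in> U \<Longrightarrow> z \<in> U \<Longrightarrow> R x y \<Longrightarrow> R y z \<Longrightarrow> R x z"
    using Cons.prems(1) unfolding tpre_def by blast
  have IH: "lexle R xs ys' \<Longrightarrow> lexle R ys' zs' \<Longrightarrow> lexle R xs zs'"
    using Cons.IH[of ys' zs'] Cons.prems ys zs by auto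
  have h1: "R a b \<and> \<not> R b a \<or> R a b \<and> R b a \<and> lexle R xs ys'" using Cons.prems(5) ys by simp
  have h2: "R b c \<and> \<not> R c b \<or> R b c \<and> R c b \<and> lexle R ys' zs'" using Cons.prems(6) ys zs by simp
  have "R a c" using h1 h2 t[OF abc] by blast
  moreover have "\<not> R c a \<or> lexle R xs zs'"
    using h1 h2 t[of b c a] t[of c a b] abc IH by blast
  ultimately show ?case using zs by simp
qed

lemma lexle_antisym: "lexle R xs ys \<Longrightarrow> lexle R ys xs \<Longrightarrow> list_all2 (\<lambda>x y. R x y \<and> R y x) xs ys"
proof (induction xs arbitrary: ys)
  case Nil then show ?case by (cases ys) auto
next
  case (Cons a xs) then show ?case by (cases ys) auto
qed

lemma lexle_cong_equiv:
  assumes "tpre R U" "set xs \<subseteq> U" "set ys \<subseteq> U" "set xs' \<subseteq> U" "set ys' \<subseteq> U"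
    "list_all2 (\<lambda>x y. R x y \<and> R y x) xs xs'" "list_all2 (\<lambda>x y. R x y \<and> R y x) ys ys'"
  shows "lexle R xs ys = lexle R xs' ys'"
  using assms
proof (induction xs arbitrary: xs' ys ys')
  case Nil then show ?case by simp
next
  case (Cons a xs)
  then obtain a' xs'' where xs': "xs' = a' # xs''" by (cases xs') auto
  show ?case
  proof (cases ys)
    case Nil then show ?thesis using Cons.prems xs' by auto
  next
    fix b ys'' assume Cons1: "ys = b # ys''"
    then obtain b' ys''' where ys': "ys' = b' # ys'''" using Cons.prems by (cases ys') auto
    have t: "\<And>x y z. x \<in> U \<Longrightarrow> y \<in> U \<Longrightarrow> z \<in> U \<Longrightarrow> R x y \<Longrightarrow> R y z \<Longrightarrow> R x z"
      using Cons.prems(1) unfolding tpre_def by blast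
    have U: "a \<in> U" "a' \<in> U" "b \<in> U" "b' \<in> U" using Cons.prems xs' ys' Cons1 by auto
    have e: "R a a'" "R a' a" "R b b'" "R b' b" using Cons.prems xs' ys' Cons1 by auto
    have IH: "lexle R xs ys'' = lexle R xs'' ys'''"
      by (rule Cons.IH) (use Cons.prems xs' ys' Cons1 in auto)
    have "R a b = R a' b'" using t U e by metis
    moreover have "R b a = R b' a'" using t U e by metis
    ultimately show ?thesis using IH xs' ys' Cons1 by simp
  qed
qed

lemma lexle_cong_rel:
  "(\<forall>x\<in>set xs \<union> set ys. \<forall>y\<in>set xs \<union> set ys. R x y = R' x y) \<Longrightarrow> lexle R xs ys = lexle R' xs ys"
proof (induction xs arbitrary: ys)
  case Nil then show ?case by simp
next
  case (Cons a xs) then show ?case by (cases ys) auto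
qed

lemma subseqs_set: "Es \<in> set (subseqs As) \<Longrightarrow> set Es \<subseteq> set As"
  using subseqs_powset[of As] by auto

lemma lexmax_cong:
  assumes "\<forall>x\<in>set As. \<forall>y\<in>set As. R x y = R' x y"
  shows "lexmax R As = lexmax R' As"
proof -
  have "\<And>Es Cs. Es \<in> set (subseqs As) \<Longrightarrow> Cs \<in> set (subseqs As) \<Longrightarrow> lexle R Es Cs = lexle R' Es Cs"
    using assms subseqs_set by (intro lexle_cong_rel) blast
  then show ?thesis unfolding lexmax_def by (auto intro!: ext)
qed

fun G :: "('a \<Rightarrow> 'a \<Rightarrow> bool) \<Rightarrow> 'a list \<Rightarrow> 'a list" where
  "G R [] = []"
| "G R (a # as) = (if \<forall>x\<in>set as. R x a then a # G R as else G R as)"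

lemma G_subseq: "G R As \<in> set (subseqs As)"
  by (induction As) (auto simp: Let_def)

lemma G_set: "set (G R As) \<subseteq> set As"
  by (rule subseqs_set[OF G_subseq])

lemma G_sorted: "sorted_wrt (\<lambda>x y. R y x) (G R As)"
proof (induction As)
  case (Cons a As)
  have "set (G R As) \<subseteq> set As" by (rule G_set)
  then show ?case using Cons by auto
qed simp

lemma G_id: "sorted_wrt (\<lambda>x y. R y x) As \<Longrightarrow> G R As = As"
  by (induction As) auto

lemma G_hd: "As \<noteq> [] \<Longrightarrow> tpre R (set As) \<Longrightarrow> G R As \<noteq> [] \<and> (\<forall>y\<in>set As. R y (hd (G R As)))"
proof (induction As)
  case Nil then show ?case by simp
next
  case (Cons a as)
  show ?case
  proof (cases "\<forall>x\<in>set as. R x a")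
    case True
    have "R a a" using Cons.prems(2) unfolding tpre_def by simp
    then show ?thesis using True by simp
  next
    case False
    then obtain x where x: "x \<in> set as" "\<not> R x a" by auto
    then have ne: "as \<noteq> []" by auto
    have IH: "G R as \<noteq> [] \<and> (\<forall>y\<in>set as. R y (hd (G R as)))"
      using Cons.IH[OF ne] tpre_mono[OF Cons.prems(2)] by auto
    have hin: "hd (G R as) \<in> set as" using IH G_set by (metis hd_in_set subsetD)
    have "R a x" using tpre_tot[OF Cons.prems(2), of x a] x by simp
    then have "R a (hd (G R as))" using IH x hin tpre_trans[OF Cons.prems(2), of a x "hd (G R as)"]
      by simp
    then show ?thesis using IH False by auto
  qed
qed

lemma subseqs_Cons_set: "set (subseqs (a#as)) = Cons a ` set (subseqs as) \<union> set (subseqs as)"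
  unfolding subseqs.simps Let_def set_append set_map ..

lemma G_lexmax: "tpre R (set As) \<Longrightarrow> lexmax R As (G R As)"
proof (induction As)
  case Nil then show ?case by (simp add: lexmax_def)
next
  case (Cons a as)
  have tp: "tpre R (set as)" using Cons.prems by (rule tpre_mono) auto
  have IH: "\<forall>Es\<in>set (subseqs as). lexle R Es (G R as)"
    using Cons.IH[OF tp] unfolding lexmax_def by blast
  have Rt: "\<And>x y z. x \<in> set (a#as) \<Longrightarrow> y \<in> set (a#as) \<Longrightarrow> z \<in> set (a#as) \<Longrightarrow> R x y \<Longrightarrow> R y z \<Longrightarrow> R x z"
    using Cons.prems unfolding tpre_def by blast
  have Rtot: "\<And>x y. x \<in> set (a#as) \<Longrightarrow> y \<in> set (a#as) \<Longrightarrow> R x y \<or> R y x"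
    using Cons.prems unfolding tpre_def by blast
  have Rrefl: "R a a" using Cons.prems unfolding tpre_def by simp
  have "\<forall>Es\<in>set (subseqs (a#as)). lexle R Es (G R (a#as))"
  proof
    fix Es assume Es: "Es \<in> set (subseqs (a#as))"
    then have Es2: "(\<exists>Es'. Es = a # Es' \<and> Es' \<in> set (subseqs as)) \<or> Es \<in> set (subseqs as)"
      unfolding subseqs_Cons_set by blast
    show "lexle R Es (G R (a#as))"
    proof (cases "\<forall>x\<in>set as. R x a")
      case True
      then have GG: "G R (a#as) = a # G R as" by simp
      from Es2 show ?thesis
      proof
        assume "\<exists>Es'. Es = a # Es' \<and> Es' \<in> set (subseqs as)"
        then obtain Es' where "Es = a # Es'" "Es' \<in> set (subseqs as)" by blast
        then show ?thesis using GG IH Rrefl by simp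
      next
        assume 2: "Es \<in> set (subseqs as)"
        show ?thesis
        proof (cases Es)
          case Nil then show ?thesis by simp
        next
          case (Cons e Es'')
          have e: "e \<in> set as" using 2 Cons subseqs_set by fastforce
          have "Es'' \<in> set (subseqs as)" using 2 Cons Cons_in_subseqsD by metis
          then have "lexle R Es'' (G R as)" using IH by blast
          moreover have "R e a" using True e by blast
          ultimately show ?thesis using GG Cons by simp
        qed
      qed
    next
      case False
      then have GG: "G R (a#as) = G R as" by simp
      from False obtain x where x: "x \<in> set as" "\<not> R x a" by blast
      then have ne: "as \<noteq> []" by auto
      have H: "G R as \<noteq> [] \<and> (\<forall>y\<in>set as. R y (hd (G R as)))" using G_hd[OF ne tp] .
      have hin: "hd (G R as) \<in> set as" using H G_set by (metis hd_in_set subsetD)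
      from Es2 show ?thesis
      proof
        assume "\<exists>Es'. Es = a # Es' \<and> Es' \<in> set (subseqs as)"
        then obtain Es' where 1: "Es = a # Es'" by blast
        have ax: "R a x" using Rtot[of x a] x by simp
        have xh: "R x (hd (G R as))" using H x by blast
        have "R a (hd (G R as))" using Rt[of a x "hd (G R as)"] ax xh x hin by simp
        moreover have "\<not> R (hd (G R as)) a" using Rt[of x "hd (G R as)" a] xh x hin by auto
        ultimately show ?thesis using 1 GG H by (cases "G R as") auto
      next
        assume "Es \<in> set (subseqs as)" then show ?thesis using IH GG by simp
      qed
    qed
  qed
  then show ?case unfolding lexmax_def by (rule conjI[OF G_subseq])
qed

lemma lexmax_equiv_G:
  assumes "tpre R (set As)" "lexmax R As C"
  shows "list_all2 (\<lambda>x y. R x y \<and> R y x) C (G R As)"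
proof -
  have "lexle R C (G R As)" using G_lexmax[OF assms(1)] assms(2) unfolding lexmax_def by blast
  moreover have "lexle R (G R As) C" using assms(2) G_subseq[of R As] unfolding lexmax_def by blast
  ultimately show ?thesis by (rule lexle_antisym)
qed

lemma splitw_ne[simp]: "splitw n xs \<noteq> []"
  by (induction xs) (auto simp: Let_def)

lemma splitw_Cons_other: "x \<noteq> n \<Longrightarrow> splitw n (x # xs) = (x # hd (splitw n xs)) # tl (splitw n xs)"
  by (simp add: Let_def)

lemma length_splitw: "length (splitw n xs) = Suc (count_list xs n)"
proof (induction xs)
  case (Cons x xs)
  then show ?case
    using splitw_ne[of n xs] by (cases "splitw n xs") (auto simp: Let_def)
qed simp

lemma sum_len_splitw: "sum_list (map length (splitw n xs)) + count_list xs n = length xs"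
proof (induction xs)
  case (Cons x xs)
  then show ?case
    using splitw_ne[of n xs] by (cases "splitw n xs") (auto simp: Let_def)
qed simp

lemma splitw_notin: "p \<in> set (splitw n xs) \<Longrightarrow> n \<notin> set p \<and> set p \<subseteq> set xs"
proof (induction xs arbitrary: p)
  case Nil then show ?case by simp
next
  case (Cons x xs)
  show ?case
  proof (cases "x = n")
    case True then show ?thesis using Cons by auto
  next
    case False
    obtain h t where ht: "splitw n xs = h # t" using splitw_ne[of n xs] by (cases "splitw n xs") auto
    have "p = x # h \<or> p \<in> set t" using Cons.prems False ht by (auto simp: Let_def)
    then show ?thesis
    proof
      assume "p = x # h" then show ?thesis using Cons.IH[of h] ht False by auto
    next
      assume "p \<in> set t" then show ?thesis using Cons.IH[of p] ht by auto
    qed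
  qed
qed

lemma joinw_Cons: "As \<noteq> [] \<Longrightarrow> joinw n (A # As) = A @ n # joinw n As"
  by (cases As) auto

lemma joinw_splitw: "joinw n (splitw n xs) = xs"
proof (induction xs)
  case (Cons x xs)
  obtain h t where ht: "splitw n xs = h # t" using splitw_ne[of n xs] by (cases "splitw n xs") auto
  show ?case
  proof (cases "x = n")
    case True then show ?thesis using Cons ht by (simp add: joinw_Cons)
  next
    case False
    then show ?thesis using Cons ht by (cases t) (auto simp: Let_def)
  qed
qed simp

lemma splitw_notin_eq: "n \<notin> set xs \<Longrightarrow> splitw n xs = [xs]"
  by (induction xs) (auto simp: Let_def)

lemma splitw_app_n: "n \<notin> set A \<Longrightarrow> splitw n (A @ n # ys) = A # splitw n ys"
  by (induction A) (auto simp: Let_def)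

lemma splitw_joinw: "Cs \<noteq> [] \<Longrightarrow> \<forall>c\<in>set Cs. n \<notin> set c \<Longrightarrow> splitw n (joinw n Cs) = Cs"
proof (induction Cs)
  case (Cons C Cs)
  show ?case
  proof (cases Cs)
    case Nil then show ?thesis using Cons by (simp add: splitw_notin_eq)
  next
    case (Cons C' Cs')
    then show ?thesis using Cons.IH Cons.prems by (simp add: splitw_app_n)
  qed
qed simp

lemma splitw_append:
  "splitw n (xs @ ys) = butlast (splitw n xs) @ [last (splitw n xs) @ hd (splitw n ys)] @ tl (splitw n ys)"
proof (induction xs)
  case Nil
  then show ?case using splitw_ne[of n ys] by (cases "splitw n ys") auto
next
  case (Cons x xs)
  obtain h t where ht: "splitw n xs = h # t" using splitw_ne[of n xs] by (cases "splitw n xs") auto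
  show ?case
  proof (cases "x = n")
    case True then show ?thesis using Cons ht by simp
  next
    case False
    then show ?thesis using Cons ht by (cases t) (auto simp: Let_def)
  qed
qed

lemma splitw_snoc_n: "splitw n (xs @ [n]) = splitw n xs @ [[]]"
  using splitw_append[of n xs "[n]"] splitw_ne[of n xs]
  by (simp add: append_butlast_last_id)

lemma splitw_snoc_other: "x \<noteq> n \<Longrightarrow> splitw n (xs @ [x]) = butlast (splitw n xs) @ [last (splitw n xs) @ [x]]"
  using splitw_append[of n xs "[x]"] by (simp add: Let_def)

lemma two_distinct_sum: "x \<in> set xs \<Longrightarrow> y \<in> set xs \<Longrightarrow> x \<noteq> y \<Longrightarrow> f x + f y \<le> sum_list (map f (xs::'a list)) + (0::nat)"
proof (induction xs)
  case (Cons a xs)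
  show ?case
  proof (cases "x = a")
    case True
    then have "y \<in> set xs" using Cons by auto
    then have "f y \<le> sum_list (map f xs)" by (simp add: member_le_sum_list)
    then show ?thesis using True by simp
  next
    case False
    show ?thesis
    proof (cases "y = a")
      case True
      then have "x \<in> set xs" using Cons False by auto
      then have "f x \<le> sum_list (map f xs)" by (simp add: member_le_sum_list)
      then show ?thesis using True by simp
    next
      case False2: False
      then show ?thesis using Cons False by auto
    qed
  qed
qed simp

lemma piece_len: "p \<in> set (splitw n xs) \<Longrightarrow> length p + count_list xs n \<le> length xs"
  using member_le_sum_list[of "length p" "map length (splitw n xs)"] sum_len_splitw[of n xs] by auto

lemma pieces_pair_len:
  assumes "x \<in> set (splitw n X) \<union> set (splitw n Y)" "y \<in> set (splitw n X) \<union> set (splitw n Y)"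
    "x \<noteq> y" "n \<in> set (X @ Y)"
  shows "length x + length y < length X + length Y"
proof -
  have cX: "count_list X n \<ge> 1 \<or> count_list Y n \<ge> 1" using assms(4)
    count_list_0_iff[of X n] count_list_0_iff[of Y n] by auto
  consider "x \<in> set (splitw n X)" "y \<in> set (splitw n X)" | "x \<in> set (splitw n Y)" "y \<in> set (splitw n Y)"
    | "x \<in> set (splitw n X)" "y \<in> set (splitw n Y)" | "x \<in> set (splitw n Y)" "y \<in> set (splitw n X)"
    using assms by blast
  then show ?thesis
  proof cases
    case 1
    have "length x + length y \<le> sum_list (map length (splitw n X))"
      using two_distinct_sum[OF 1 assms(3), of length] by simp
    moreover have "length (splitw n X) \<ge> 2"
      using 1 assms(3) by (cases "splitw n X" rule: remdups_adj.cases) auto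
    ultimately show ?thesis using sum_len_splitw[of n X] length_splitw[of n X] by simp
  next
    case 2
    have "length x + length y \<le> sum_list (map length (splitw n Y))"
      using two_distinct_sum[OF 2 assms(3), of length] by simp
    moreover have "length (splitw n Y) \<ge> 2"
      using 2 assms(3) by (cases "splitw n Y" rule: remdups_adj.cases) auto
    ultimately show ?thesis using sum_len_splitw[of n Y] length_splitw[of n Y] by simp
  next
    case 3
    then show ?thesis using piece_len[of x n X] piece_len[of y n Y] cX by linarith
  next
    case 4
    then show ?thesis using piece_len[of y n X] piece_len[of x n Y] cX by linarith
  qed
qed

lemma le_aux_refl: "le_aux d x x"
proof (induction d arbitrary: x)
  case 0 then show ?case by simp
next
  case (Suc d)
  show ?case by (simp add: Let_def lexle_refl Suc.IH)
qed

lemma wle_refl: "wle x x"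
  unfolding wle_def by (rule le_aux_refl)

definition span :: "nat list \<Rightarrow> nat" where
  "span xs = (if xs = [] then 0 else Suc (Max (set xs) - Min (set xs)))"

lemma span_less:
  assumes "W \<noteq> []" "n = Min (set W)" "set w \<subseteq> set W - {n}"
  shows "span w < span W"
proof (cases "w = []")
  case True then show ?thesis using assms by (simp add: span_def)
next
  case False
  have fin: "finite (set W)" "set W \<noteq> {}" using assms by auto
  have "Min (set w) \<in> set w" using False by simp
  then have m1: "Min (set w) \<in> set W" "Min (set w) \<noteq> n" using assms(3) by auto
  then have "n \<le> Min (set w)" using assms(2) fin by simp
  with m1 have m2: "n < Min (set w)" by simp
  have "Max (set w) \<in> set W" using False assms(3) by (metis DiffD1 Max_in finite_set set_empty subsetD)
  then have m3: "Max (set w) \<le> Max (set W)" using fin by simp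
  have mw: "Min (set w) \<le> Max (set w)" using False by simp
  have "Max (set w) - Min (set w) < Max (set W) - Min (set W)" using m2 m3 mw assms(2) by linarith
  then show ?thesis using assms(1) False by (simp add: span_def)
qed

definition good :: "nat list \<Rightarrow> nat list \<Rightarrow> bool" where
  "good X Y \<longleftrightarrow> (\<forall>d. length (X @ Y) < d \<longrightarrow> le_aux d X Y = wle X Y)"

abbreviation P :: "nat \<Rightarrow> nat list \<Rightarrow> nat list list" where
  "P n X \<equiv> G wle (splitw n X)"

lemma Kgen:
  assumes tp: "tpre wle U"
    and sub: "set (splitw n X) \<subseteq> U" "set (splitw n Y) \<subseteq> U"
    and ag: "\<forall>x\<in>U. \<forall>y\<in>U. \<forall>d. (x = y \<or> length (x @ y) < d) \<longrightarrow> le_aux d x y = wle x y"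
    and ge: "\<forall>z\<in>set (X @ Y). n \<le> z"
    and d: "length (X @ Y) < d"
  shows "le_aux d X Y = lexle wle (P n X) (P n Y)"
proof -
  obtain k where k: "d = Suc k" using d by (cases d) auto
  show ?thesis
  proof (cases "X @ Y = []")
    case True
    then have "X = []" "Y = []" by auto
    then show ?thesis using k wle_refl[of "[]"] by simp
  next
    case ne: False
    show ?thesis
    proof (cases "n \<in> set (X @ Y)")
      case False
      then have sp: "splitw n X = [X]" "splitw n Y = [Y]" by (auto simp: splitw_notin_eq)
      then have "X \<in> U" "Y \<in> U" using sub by auto
      then have "le_aux d X Y = wle X Y" using ag d by blast
      then show ?thesis using sp by auto
    next
      case True
      have fin: "finite (set (X @ Y))" "set (X @ Y) \<noteq> {}" using ne by auto
      have mn: "Min (set (X @ Y)) = n" using True ge fin by (intro Min_eqI) auto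
      define PX where "PX = splitw n X"
      define PY where "PY = splitw n Y"
      have unf: "le_aux d X Y = lexle (le_aux k) (SOME C. lexmax (le_aux k) PX C) (SOME D. lexmax (le_aux k) PY D)"
        unfolding k le_aux.simps if_not_P[OF ne] Let_def mn PX_def PY_def ..
      have agr: "\<forall>x\<in>set PX \<union> set PY. \<forall>y\<in>set PX \<union> set PY. le_aux k x y = wle x y"
      proof (intro ballI)
        fix x y assume xy: "x \<in> set PX \<union> set PY" "y \<in> set PX \<union> set PY"
        have xyU: "x \<in> U" "y \<in> U" using xy sub PX_def PY_def by auto
        show "le_aux k x y = wle x y"
        proof (cases "x = y")
          case True then show ?thesis using ag xyU by blast
        next
          case False
          have "length x + length y < length X + length Y"
            using pieces_pair_len[of x n X Y y] xy False True PX_def PY_def by auto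
          then have "length (x @ y) < k" using d k by simp
          then show ?thesis using ag xyU by blast
        qed
      qed
      have lmX: "lexmax (le_aux k) PX = lexmax wle PX"
        by (rule lexmax_cong) (use agr in blast)
      have lmY: "lexmax (le_aux k) PY = lexmax wle PY"
        by (rule lexmax_cong) (use agr in blast)
      define C0 where "C0 = (SOME C. lexmax wle PX C)"
      define D0 where "D0 = (SOME D. lexmax wle PY D)"
      have tpX: "tpre wle (set PX)" using tp sub PX_def tpre_mono by blast
      have tpY: "tpre wle (set PY)" using tp sub PY_def tpre_mono by blast
      have C0: "lexmax wle PX C0" unfolding C0_def by (rule someI[where P="lexmax wle PX", OF G_lexmax[OF tpX]])
      have D0: "lexmax wle PY D0" unfolding D0_def by (rule someI[where P="lexmax wle PY", OF G_lexmax[OF tpY]])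
      have sC: "set C0 \<subseteq> set PX" using C0 subseqs_set unfolding lexmax_def by blast
      have sD: "set D0 \<subseteq> set PY" using D0 subseqs_set unfolding lexmax_def by blast
      have eC: "list_all2 (\<lambda>x y. wle x y \<and> wle y x) C0 (G wle PX)" by (rule lexmax_equiv_G[OF tpX C0])
      have eD: "list_all2 (\<lambda>x y. wle x y \<and> wle y x) D0 (G wle PY)" by (rule lexmax_equiv_G[OF tpY D0])
      have "le_aux d X Y = lexle (le_aux k) C0 D0"
        using unf lmX lmY C0_def D0_def by simp
      also have "\<dots> = lexle wle C0 D0"
        by (rule lexle_cong_rel) (use agr sC sD in blast)
      also have "\<dots> = lexle wle (G wle PX) (G wle PY)"
      proof (rule lexle_cong_equiv[OF tp _ _ _ _ eC eD])
        show "set C0 \<subseteq> U" using sC sub PX_def by blast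
        show "set D0 \<subseteq> U" using sD sub PY_def by blast
        show "set (G wle PX) \<subseteq> U" using G_set[of wle PX] sub(1) unfolding PX_def by blast
        show "set (G wle PY) \<subseteq> U" using G_set[of wle PY] sub(2) unfolding PY_def by blast
      qed
      finally show ?thesis unfolding PX_def PY_def .
    qed
  qed
qed

lemma main_ind: "good A B \<and> (wle A B \<or> wle B A) \<and> (wle A B \<longrightarrow> wle B C \<longrightarrow> wle A C)"
proof (induction "span (A@B@C)" arbitrary: A B C rule: less_induct)
  case less
  show ?case
  proof (cases "A@B@C = []")
    case True
    then have "A = []" "B = []" "C = []" by auto
    moreover have "good [] []" unfolding good_def wle_def
      by (auto simp: gr0_conv_Suc)
    ultimately show ?thesis using wle_refl[of "[]"] by simp
  next
    case False
    define n where "n = Min (set (A@B@C))"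
    define U where "U = set (splitw n A) \<union> set (splitw n B) \<union> set (splitw n C)"
    have Usub: "\<And>x. x \<in> U \<Longrightarrow> set x \<subseteq> set (A@B@C) - {n}"
      unfolding U_def using splitw_notin by fastforce
    have IH: "good x y \<and> (wle x y \<or> wle y x) \<and> (wle x y \<longrightarrow> wle y z \<longrightarrow> wle x z)"
      if "x \<in> U" "y \<in> U" "z \<in> U" for x y z
    proof -
      have "set (x@y@z) \<subseteq> set (A@B@C) - {n}" using Usub[OF that(1)] Usub[OF that(2)] Usub[OF that(3)] by auto
      then have "span (x@y@z) < span (A@B@C)" by (rule span_less[OF False n_def])
      then show ?thesis by (rule less.hyps)
    qed
    have tp: "tpre wle U" unfolding tpre_def
    proof (intro conjI ballI impI)
      fix x assume "x \<in> U" show "wle x x" by (rule wle_refl)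
    next
      fix x y assume "x \<in> U" "y \<in> U" then show "wle x y \<or> wle y x" using IH[of x y y] by blast
    next
      fix x y z assume "x \<in> U" "y \<in> U" "z \<in> U" "wle x y" "wle y z"
      then show "wle x z" using IH[of x y z] by blast
    qed
    have ag: "\<forall>x\<in>U. \<forall>y\<in>U. \<forall>d. (x = y \<or> length (x @ y) < d) \<longrightarrow> le_aux d x y = wle x y"
    proof (intro ballI allI impI)
      fix x y d assume xy: "x \<in> U" "y \<in> U" "x = y \<or> length (x @ y) < d"
      show "le_aux d x y = wle x y"
      proof (cases "x = y")
        case True then show ?thesis using le_aux_refl wle_refl by simp
      next
        case False
        then have "length (x @ y) < d" using xy by simp
        moreover have "good x y" using IH[of x y y] xy by blast
        ultimately show ?thesis unfolding good_def by blast
      qed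
    qed
    have ge: "\<forall>z\<in>set (A@B@C). n \<le> z" unfolding n_def by simp
    have K: "le_aux d X Y = lexle wle (P n X) (P n Y)"
      if "X \<in> {A,B,C}" "Y \<in> {A,B,C}" "length (X @ Y) < d" for X Y d
    proof (rule Kgen[OF tp])
      show "set (splitw n X) \<subseteq> U" using that(1) unfolding U_def by blast
      show "set (splitw n Y) \<subseteq> U" using that(2) unfolding U_def by blast
      show "\<forall>x\<in>U. \<forall>y\<in>U. \<forall>d. (x = y \<or> length (x @ y) < d) \<longrightarrow> le_aux d x y = wle x y" by (rule ag)
      show "\<forall>z\<in>set (X @ Y). n \<le> z" using that(1,2) ge by auto
      show "length (X @ Y) < d" by (rule that(3))
    qed
    have W: "wle X Y = lexle wle (P n X) (P n Y)" if "X \<in> {A,B,C}" "Y \<in> {A,B,C}" for X Y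
    proof -
      have e: "wle X Y = le_aux (Suc (length (X@Y))) X Y" by (rule wle_def)
      show ?thesis using e K[OF that, of "Suc (length (X@Y))"] by simp
    qed
    have gd: "good A B" unfolding good_def
    proof (intro allI impI)
      fix d assume "length (A @ B) < d"
      then show "le_aux d A B = wle A B" using K[of A B d] W[of A B] by simp
    qed
    have PU: "set (P n X) \<subseteq> U" if "X \<in> {A,B,C}" for X
      using G_set[of wle "splitw n X"] that unfolding U_def by blast
    have "lexle wle (P n A) (P n B) \<or> lexle wle (P n B) (P n A)"
      by (rule lexle_total[OF tp]) (use PU in auto)
    then have tot: "wle A B \<or> wle B A" using W by simp
    have "lexle wle (P n A) (P n B) \<longrightarrow> lexle wle (P n B) (P n C) \<longrightarrow> lexle wle (P n A) (P n C)"
      using lexle_trans[OF tp PU[of A] PU[of B] PU[of C]] by simp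
    then have tr: "wle A B \<longrightarrow> wle B C \<longrightarrow> wle A C" using W by simp
    show ?thesis using gd tot tr by blast
  qed
qed

lemma wle_total: "wle A B \<or> wle B A"
  using main_ind by blast

lemma wle_trans: "wle A B \<Longrightarrow> wle B C \<Longrightarrow> wle A C"
  using main_ind by blast

lemma wle_good: "length (A @ B) < d \<Longrightarrow> le_aux d A B = wle A B"
  using main_ind[of A B A] unfolding good_def by blast

lemma tpre_wle: "tpre wle U"
  unfolding tpre_def using wle_refl wle_total wle_trans by blast

lemma unfold_any:
  assumes "\<forall>z\<in>set (X @ Y). n \<le> z"
  shows "wle X Y = lexle wle (P n X) (P n Y)"
proof -
  have "le_aux (Suc (length (X@Y))) X Y = lexle wle (P n X) (P n Y)"
  proof (rule Kgen[OF tpre_wle, of n X UNIV Y])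
    show "\<forall>x\<in>UNIV. \<forall>y\<in>UNIV. \<forall>d. (x = y \<or> length (x @ y) < d) \<longrightarrow> le_aux d x y = wle x y"
      using wle_good le_aux_refl wle_refl by metis
  qed (use assms in auto)
  moreover have "wle X Y = le_aux (Suc (length (X@Y))) X Y" by (rule wle_def)
  ultimately show ?thesis by simp
qed

abbreviation sdesc :: "nat list list \<Rightarrow> bool" where
  "sdesc xs \<equiv> sorted_wrt (\<lambda>x y. wle y x) xs"

lemma P_Nil[simp]: "P n [] = [[]]"
  by simp

lemma G_ne: "xs \<noteq> [] \<Longrightarrow> G wle xs \<noteq> []"
  using G_hd[OF _ tpre_wle] by blast

lemma wle_nil: "wle [] Z"
proof (induction "length Z" arbitrary: Z rule: less_induct)
  case less
  show ?case
  proof (cases "Z = []")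
    case True then show ?thesis using wle_refl by simp
  next
    case False
    define n where "n = Min (set Z)"
    have nZ: "n \<in> set Z" using False n_def by simp
    have ge: "\<forall>z\<in>set ([] @ Z). n \<le> z" using n_def by simp
    have u: "wle [] Z = lexle wle [[]] (P n Z)" using unfold_any[OF ge] by simp
    obtain h t where ht: "P n Z = h # t" using G_ne[of "splitw n Z"] by (cases "P n Z") auto
    have hin: "h \<in> set (splitw n Z)" using ht G_set[of wle "splitw n Z"] by auto
    have "count_list Z n \<ge> 1" using nZ count_list_0_iff[of Z n] by simp
    then have "length h < length Z" using piece_len[OF hin] by simp
    then have "wle [] h" by (rule less.hyps)
    then show ?thesis using u ht by simp
  qed
qed

lemma NF_cases: "NF X \<Longrightarrow> X \<noteq> [] \<Longrightarrow> \<exists>n As. X = joinw n As \<and> 2 \<le> length As \<and>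
   (\<forall>a\<in>set As. a \<in> S (Suc n) \<and> NF a) \<and> (\<forall>i. Suc i < length As \<longrightarrow> wle (As ! Suc i) (As ! i))"
  by (cases rule: NF.cases) auto

lemma set_joinw: "As \<noteq> [] \<Longrightarrow> set (joinw n As) \<subseteq> insert n (\<Union> (set ` set As))"
proof (induction As)
  case (Cons A As) then show ?case by (cases As) auto
qed simp

lemma n_in_joinw: "2 \<le> length As \<Longrightarrow> n \<in> set (joinw n As)"
  by (cases As rule: remdups_adj.cases) auto

lemma S_def2: "a \<in> S k \<longleftrightarrow> (\<forall>x\<in>set a. k \<le> x)"
  by (simp add: S_def)

lemma adj_sorted: "(\<forall>i. Suc i < length As \<longrightarrow> wle (As ! Suc i) (As ! i)) \<Longrightarrow> sdesc As"
proof -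
  assume a: "\<forall>i. Suc i < length As \<longrightarrow> wle (As ! Suc i) (As ! i)"
  have "transp (\<lambda>x y. wle y x)" unfolding transp_def using wle_trans by blast
  then show ?thesis using a sorted_wrt_iff_nth_Suc_transp by blast
qed

lemma NF_pieces:
  assumes "NF X" "\<forall>z\<in>set X. k \<le> z"
  shows "sdesc (splitw k X) \<and> (\<forall>a\<in>set (splitw k X). NF a)"
proof (cases "X = []")
  case True then show ?thesis using NF_empty by simp
next
  case False
  then obtain n As where X: "X = joinw n As" "2 \<le> length As" "\<forall>a\<in>set As. a \<in> S (Suc n) \<and> NF a"
    "\<forall>i. Suc i < length As \<longrightarrow> wle (As ! Suc i) (As ! i)"
    using NF_cases[OF assms(1)] by blast
  have nX: "n \<in> set X" using X n_in_joinw by simp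
  have allge: "\<forall>z\<in>set X. n \<le> z"
  proof
    fix z assume "z \<in> set X"
    then have "z \<in> insert n (\<Union> (set ` set As))" using set_joinw[of As n] X(1,2) by fastforce
    then show "n \<le> z" using X(3) unfolding S_def by (auto dest: Suc_leD)
  qed
  have kn: "k \<le> n" using assms(2) nX by blast
  show ?thesis
  proof (cases "k = n")
    case True
    have "\<forall>c\<in>set As. n \<notin> set c" using X(3) unfolding S_def by fastforce
    moreover have "As \<noteq> []" using X(2) by auto
    ultimately have "splitw n X = As" using X(1) splitw_joinw[of As n] by simp
    then show ?thesis using True X adj_sorted by simp
  next
    case False
    then have "k \<notin> set X" using allge kn by fastforce
    then have "splitw k X = [X]" by (rule splitw_notin_eq)
    then show ?thesis using assms(1) by simp
  qed
qed

lemma NF_unique: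
  assumes "NF X" "NF Y" "wle X Y" "wle Y X"
  shows "X = Y"
  using assms
proof (induction "length X + length Y" arbitrary: X Y rule: less_induct)
  case less
  show ?case
  proof (cases "X @ Y = []")
    case True then show ?thesis by simp
  next
    case False
    define n where "n = Min (set (X @ Y))"
    have ge: "\<forall>z\<in>set (X @ Y). n \<le> z" using n_def by simp
    have nXY: "n \<in> set (X @ Y)" unfolding n_def using False by (intro Min_in) auto
    have pX: "sdesc (splitw n X) \<and> (\<forall>a\<in>set (splitw n X). NF a)" using NF_pieces[OF less.prems(1), of n] ge by simp
    have pY: "sdesc (splitw n Y) \<and> (\<forall>a\<in>set (splitw n Y). NF a)" using NF_pieces[OF less.prems(2), of n] ge by simp
    have ge': "\<forall>z\<in>set (Y @ X). n \<le> z" using ge by auto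
    have l1: "lexle wle (splitw n X) (splitw n Y)"
      using unfold_any[OF ge] less.prems(3) G_id pX pY by metis
    have l2: "lexle wle (splitw n Y) (splitw n X)"
      using unfold_any[OF ge'] less.prems(4) G_id pX pY by metis
    have la: "list_all2 (\<lambda>x y. wle x y \<and> wle y x) (splitw n X) (splitw n Y)"
      by (rule lexle_antisym[OF l1 l2])
    have leq: "length (splitw n X) = length (splitw n Y)" using la list_all2_lengthD by blast
    then have ceq: "count_list X n = count_list Y n" using length_splitw by simp
    have "count_list X n + count_list Y n \<ge> 1" using nXY count_list_0_iff[of X n] count_list_0_iff[of Y n] by auto
    then have cX: "count_list X n \<ge> 1" "count_list Y n \<ge> 1" using ceq by auto
    have "splitw n X = splitw n Y"
    proof (rule nth_equalityI[OF leq])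
      fix i assume i: "i < length (splitw n X)"
      define x where "x = splitw n X ! i"
      define y where "y = splitw n Y ! i"
      have xin: "x \<in> set (splitw n X)" using i x_def by simp
      have yin: "y \<in> set (splitw n Y)" using i leq y_def by simp
      have "length x < length X" using piece_len[OF xin] cX by simp
      moreover have "length y < length Y" using piece_len[OF yin] cX by simp
      moreover have "wle x y \<and> wle y x" using la i list_all2_nthD x_def y_def by blast
      ultimately show "splitw n X ! i = splitw n Y ! i"
        using less.hyps[of x y] pX pY xin yin x_def y_def by simp
    qed
    then show ?thesis using joinw_splitw by metis
  qed
qed

lemma wle_nonempty:
  assumes "NF B" "B \<noteq> []"
  shows "\<not> wle B []"
proof -
  define n where "n = Min (set B)"
  have ge: "\<forall>z\<in>set (B @ []). n \<le> z" using n_def by simp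
  have nB: "n \<in> set B" using n_def assms by simp
  have pB: "sdesc (splitw n B)" using NF_pieces[OF assms(1)] ge by simp
  have u: "wle B [] = lexle wle (splitw n B) [[]]" using unfold_any[OF ge] G_id[OF pB] by simp
  have "length (splitw n B) \<ge> 2" using length_splitw[of n B] nB count_list_0_iff[of B n] by simp
  then obtain b1 b2 t where "splitw n B = b1 # b2 # t"
    by (cases "splitw n B" rule: remdups_adj.cases) auto
  then show ?thesis using u wle_nil[of b1] by simp
qed

lemma joinw_snoc: "As \<noteq> [] \<Longrightarrow> joinw n (As @ [C]) = joinw n As @ n # C"
proof (induction As)
  case (Cons A As) then show ?case by (cases As) (auto simp: joinw_Cons)
qed simp

lemma NF_snoc:
  assumes "NF b" "\<forall>z\<in>set b. k \<le> z"
  shows "NF (b @ [k])"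
proof (cases "b = []")
  case True
  have "NF (joinw k [[], []])"
    by (rule NF_join) (auto simp: S_def less_Suc_eq wle_refl NF_empty)
  then show ?thesis using True by simp
next
  case False
  then obtain n As where X: "b = joinw n As" "2 \<le> length As" "\<forall>a\<in>set As. a \<in> S (Suc n) \<and> NF a"
    "\<forall>i. Suc i < length As \<longrightarrow> wle (As ! Suc i) (As ! i)"
    using NF_cases[OF assms(1)] by blast
  have nX: "n \<in> set b" using X n_in_joinw by simp
  have allge: "\<forall>z\<in>set b. n \<le> z"
  proof
    fix z assume "z \<in> set b"
    then have "z \<in> insert n (\<Union> (set ` set As))" using set_joinw[of As n] X(1,2) by fastforce
    then show "n \<le> z" using X(3) unfolding S_def by (auto dest: Suc_leD)
  qed
  have kn: "k \<le> n" using assms(2) nX by blast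
  show ?thesis
  proof (cases "k = n")
    case True
    have ne: "As \<noteq> []" using X by auto
    have e: "b @ [k] = joinw n (As @ [[]])" using joinw_snoc[OF ne] X True by simp
    have "NF (joinw n (As @ [[]]))"
    proof (rule NF_join)
      show "2 \<le> length (As @ [[]])" using X by simp
      show "\<forall>a\<in>set (As @ [[]]). a \<in> S (Suc n) \<and> NF a" using X NF_empty by (auto simp: S_def)
      show "\<forall>i. Suc i < length (As @ [[]]) \<longrightarrow> wle ((As @ [[]]) ! Suc i) ((As @ [[]]) ! i)"
      proof (intro allI impI)
        fix i assume i: "Suc i < length (As @ [[]])"
        show "wle ((As @ [[]]) ! Suc i) ((As @ [[]]) ! i)"
        proof (cases "Suc i < length As")
          case True then show ?thesis using X(4) by (simp add: nth_append)
        next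
          case False
          then have "Suc i = length As" using i by simp
          then show ?thesis using wle_nil by (simp add: nth_append)
        qed
      qed
    qed
    then show ?thesis using e by simp
  next
    case False
    then have bS: "b \<in> S (Suc k)" using allge kn unfolding S_def by fastforce
    have "NF (joinw k [b, []])"
      by (rule NF_join) (use bS assms(1) NF_empty wle_nil in \<open>auto simp: S_def less_Suc_eq\<close>)
    then show ?thesis by simp
  qed
qed

lemma lexle_snoc_min: "(\<forall>z. wle e z) \<Longrightarrow> lexle wle (x @ [e]) y \<longleftrightarrow> lexle wle x y \<and> \<not> lexle wle y x"
proof (induction x arbitrary: y)
  case Nil then show ?case by (cases y) auto
next
  case (Cons a x)
  show ?case
  proof (cases y)
    case Nil then show ?thesis by simp
  next
    case (Cons h t)
    have IH: "lexle wle (x @ [e]) t \<longleftrightarrow> lexle wle x t \<and> \<not> lexle wle t x" using Cons.IH Cons.prems by blast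
    show ?thesis using IH Cons wle_total[of a h] by auto
  qed
qed

lemma succ_lemma:
  assumes "NF X" "NF c" "\<forall>z\<in>set X. k \<le> z" "\<forall>z\<in>set c. k \<le> z"
  shows "wle (X @ [k]) c \<longleftrightarrow> wle X c \<and> \<not> wle c X"
proof -
  have pX: "sdesc (splitw k X)" using NF_pieces[OF assms(1,3)] by simp
  have pc: "sdesc (splitw k c)" using NF_pieces[OF assms(2,4)] by simp
  have pX1: "sdesc (splitw k X @ [[]])" using pX wle_nil by (simp add: sorted_wrt_append)
  have g1: "\<forall>z\<in>set ((X @ [k]) @ c). k \<le> z" using assms by auto
  have g2: "\<forall>z\<in>set (X @ c). k \<le> z" using assms by auto
  have g3: "\<forall>z\<in>set (c @ X). k \<le> z" using assms by auto
  have "wle (X @ [k]) c = lexle wle (splitw k X @ [[]]) (splitw k c)"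
    using unfold_any[OF g1] G_id[OF pX1] G_id[OF pc] splitw_snoc_n[of k X] by simp
  also have "\<dots> = (lexle wle (splitw k X) (splitw k c) \<and> \<not> lexle wle (splitw k c) (splitw k X))"
    by (rule lexle_snoc_min) (simp add: wle_nil)
  also have "\<dots> = (wle X c \<and> \<not> wle c X)"
    using unfold_any[OF g2] unfold_any[OF g3] G_id[OF pX] G_id[OF pc] by simp
  finally show ?thesis .
qed

lemma diamond_equiv:
  assumes "NF B"
  shows "wle (Diamond 1 B) (B @ [1]) \<and> wle (B @ [1]) (Diamond 1 B)"
proof -
  define q where "q = splitw 0 B"
  define b' where "b' = last q @ [1]"
  define r where "r = G wle (butlast q @ [b'])"
  define W where "W = joinw 0 r"
  have qne: "q \<noteq> []" unfolding q_def by simp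
  have pq: "sdesc q \<and> (\<forall>a\<in>set q. NF a)" unfolding q_def by (rule NF_pieces[OF assms]) simp
  have lq: "last q \<in> set q" using qne by simp
  have no0: "\<forall>a\<in>set q. 0 \<notin> set a" unfolding q_def using splitw_notin by blast
  have ge1: "\<forall>a\<in>set q. \<forall>z\<in>set a. 1 \<le> z" using no0 by (metis less_one not_le)
  have b'NF: "NF b'" unfolding b'_def using NF_snoc[of "last q" 1] pq lq ge1 by blast
  have b'ge: "\<forall>z\<in>set b'. 1 \<le> z" unfolding b'_def using ge1 lq by auto
  have rne: "r \<noteq> []" unfolding r_def by (rule G_ne) simp
  have rset: "set r \<subseteq> set (butlast q) \<union> {b'}" unfolding r_def using G_set[of wle "butlast q @ [b']"] by auto
  have rNF: "\<forall>a\<in>set r. NF a \<and> (\<forall>z\<in>set a. 1 \<le> z)"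
  proof
    fix a assume "a \<in> set r"
    then have "a \<in> set (butlast q) \<or> a = b'" using rset by blast
    then have "a \<in> set q \<or> a = b'" using in_set_butlastD[of a q] by blast
    then show "NF a \<and> (\<forall>z\<in>set a. 1 \<le> z)" using pq ge1 b'NF b'ge by blast
  qed
  have rs: "sdesc r" unfolding r_def by (rule G_sorted)
  have WNF: "NF W"
  proof (cases "length r \<ge> 2")
    case True
    show ?thesis unfolding W_def
    proof (rule NF_join[OF True])
      show "\<forall>a\<in>set r. a \<in> S (Suc 0) \<and> NF a" using rNF by (auto simp: S_def)
      show "\<forall>i. Suc i < length r \<longrightarrow> wle (r ! Suc i) (r ! i)"
        using rs sorted_wrt_nth_less by fastforce
    qed
  next
    case False
    then obtain w where "r = [w]" using rne by (cases r rule: remdups_adj.cases) auto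
    then show ?thesis unfolding W_def using rNF by simp
  qed
  have r0: "\<forall>c\<in>set r. 0 \<notin> set c" using rNF by fastforce
  have sW: "splitw 0 W = r" unfolding W_def by (rule splitw_joinw[OF rne r0])
  have sB1: "splitw 0 (B @ [1]) = butlast q @ [b']"
    unfolding q_def b'_def by (rule splitw_snoc_other) simp
  have g: "\<forall>z\<in>set (W @ (B @ [1])). 0 \<le> z" "\<forall>z\<in>set ((B @ [1]) @ W). 0 \<le> z" by auto
  have Gr: "G wle r = r" by (rule G_id[OF rs])
  have e1: "wle W (B @ [1])" using unfold_any[OF g(1)] sW sB1 Gr lexle_refl[of r wle] wle_refl
    unfolding r_def by simp
  have e2: "wle (B @ [1]) W" using unfold_any[OF g(2)] sW sB1 Gr lexle_refl[of r wle] wle_refl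
    unfolding r_def by simp
  have "Diamond 1 B = W"
    unfolding Diamond_def
  proof (rule the_equality)
    show "NF W \<and> wequiv W (B @ [1])" using WNF e1 e2 unfolding wequiv_def by simp
  next
    fix W' assume "NF W' \<and> wequiv W' (B @ [1])"
    then show "W' = W" using NF_unique[OF _ WNF] e1 e2 wle_trans unfolding wequiv_def by blast
  qed
  then show ?thesis using e1 e2 by simp
qed

fun pe :: "nat list list \<Rightarrow> nat list list \<Rightarrow> bool" where
  "pe [] p = True"
| "pe (x#xs) [] = False"
| "pe (x#xs) (y#ys) = (wle x y \<and> wle y x \<and> pe xs ys)"

lemma last_min: "sdesc xs \<Longrightarrow> x \<in> set xs \<Longrightarrow> wle (last xs) x"
proof (induction xs)
  case Nil then show ?case by simp
next
  case (Cons a xs)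
  show ?case
  proof (cases "xs = []")
    case True then show ?thesis using Cons wle_refl by simp
  next
    case False
    then have l: "last (a # xs) = last xs" by simp
    have lin: "last xs \<in> set xs" using False by simp
    show ?thesis
    proof (cases "x = a")
      case True then show ?thesis using Cons.prems(1) lin l by simp
    next
      case False then show ?thesis using Cons l by simp
    qed
  qed
qed

lemma G_snoc_small: "\<forall>x\<in>set xs. \<not> wle b' x \<Longrightarrow> G wle (xs @ [b']) = [b']"
  by (induction xs) auto

lemma pe_bounded: "\<forall>x\<in>set q. \<forall>y\<in>set p. wle y x \<Longrightarrow> lexle wle q p \<longleftrightarrow> pe q p"
proof (induction q arbitrary: p)
  case Nil then show ?case by simp
next
  case (Cons b q) then show ?case by (cases p) auto
qed

lemma seq_lemma:
  assumes "sdesc p" "sdesc q" "q \<noteq> []"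
    "\<forall>c\<in>set p \<union> set q. wle b' c \<longleftrightarrow> (wle (last q) c \<and> \<not> wle c (last q))"
  shows "pe q p \<longleftrightarrow> lexle wle q p \<and> \<not> lexle wle (G wle (butlast q @ [b'])) p"
  using assms
proof (induction q arbitrary: p)
  case Nil then show ?case by simp
next
  case (Cons b q'')
  show ?case
  proof (cases "q'' = []")
    case True
    show ?thesis
    proof (cases p)
      case Nil then show ?thesis by simp
    next
      case (Cons a p')
      have "wle b' a \<longleftrightarrow> (wle b a \<and> \<not> wle a b)" using Cons.prems(4) True Cons by simp
      then show ?thesis using True Cons by auto
    qed
  next
    case False
    have lst: "last (b # q'') = last q''" using False by simp
    have bl: "butlast (b # q'') = b # butlast q''" using False by simp
    have sq: "sdesc q''" using Cons.prems(2) by simp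
    have bge: "\<forall>x\<in>set q''. wle x b" using Cons.prems(2) by simp
    define l where "l = last q''"
    have lin: "l \<in> set q''" using False l_def by simp
    have pr: "\<forall>c\<in>set p \<union> set (b # q''). wle b' c \<longleftrightarrow> (wle l c \<and> \<not> wle c l)"
      using Cons.prems(4) lst l_def by simp
    show ?thesis
    proof (cases "wle b' b")
      case True
      have cond: "\<forall>x\<in>set (butlast q'' @ [b']). wle x b"
        using bge True in_set_butlastD by fastforce
      have Gq: "G wle (butlast (b # q'') @ [b']) = b # G wle (butlast q'' @ [b'])"
        using bl cond by simp
      show ?thesis
      proof (cases p)
        case Nil then show ?thesis by simp
      next
        case (Cons a p')
        have IH: "pe q'' p' \<longleftrightarrow> lexle wle q'' p' \<and> \<not> lexle wle (G wle (butlast q'' @ [b'])) p'"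
        proof (rule Cons.IH)
          show "sdesc p'" using Cons.prems(1) \<open>p = a # p'\<close> by simp
          show "sdesc q''" by (rule sq)
          show "q'' \<noteq> []" by (rule False)
          show "\<forall>c\<in>set p' \<union> set q''. wle b' c \<longleftrightarrow> (wle (last q'') c \<and> \<not> wle c (last q''))"
            using pr \<open>p = a # p'\<close> l_def by simp
        qed
        show ?thesis using IH Gq \<open>p = a # p'\<close> by auto
      qed
    next
      case nb: False
      have lb: "wle l b" using bge lin by simp
      have "\<not> (wle l b \<and> \<not> wle b l)" using pr nb by simp
      then have bl2: "wle b l" using lb by simp
      have xeq: "\<forall>x\<in>set q''. wle x l \<and> wle l x"
      proof
        fix x assume x: "x \<in> set q''"
        have "wle l x" using last_min[OF sq x] l_def by simp
        moreover have "wle x l" using wle_trans[of x b l] bge x bl2 by simp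
        ultimately show "wle x l \<and> wle l x" by simp
      qed
      have small: "\<forall>x\<in>set (butlast q''). \<not> wle b' x"
      proof
        fix x assume "x \<in> set (butlast q'')"
        then have x: "x \<in> set q''" by (rule in_set_butlastD)
        then show "\<not> wle b' x" using pr xeq by auto
      qed
      have cnd: "\<not> (\<forall>x\<in>set (butlast q'' @ [b']). wle x b)" using nb by simp
      have Gq: "G wle (butlast (b # q'') @ [b']) = [b']"
        using bl cnd G_snoc_small[OF small] by simp
      show ?thesis
      proof (cases p)
        case Nil then show ?thesis by simp
      next
        case (Cons a p')
        have ain: "a \<in> set p" using Cons by simp
        have nba: "\<not> wle b' a \<longleftrightarrow> wle a l" using pr ain wle_total[of a l] by auto
        have rhs: "lexle wle [b'] (a # p') \<longleftrightarrow> wle b' a" by auto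
        have bd: "\<forall>x\<in>set q''. \<forall>y\<in>set p'. wle y x" if "wle a b" 
        proof (intro ballI)
          fix x y assume x: "x \<in> set q''" and y: "y \<in> set p'"
          have "wle y a" using Cons.prems(1) \<open>p = a # p'\<close> y by simp
          moreover have "wle b x" using wle_trans[of b l x] bl2 xeq x by simp
          ultimately show "wle y x" using that wle_trans[of y a b] wle_trans[of y b x] by blast
        qed
        have al_ab: "wle a l \<longleftrightarrow> wle a b" using wle_trans[of a l b] lb wle_trans[of a b l] bl2 by blast
        have R: "lexle wle (G wle (butlast (b # q'') @ [b'])) p \<longleftrightarrow> wle b' a"
          using Gq rhs \<open>p = a # p'\<close> by simp
        have L: "lexle wle (b # q'') p \<longleftrightarrow> (wle b a \<and> \<not> wle a b \<or> wle b a \<and> wle a b \<and> lexle wle q'' p')"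
          using \<open>p = a # p'\<close> by simp
        have pp: "pe (b # q'') p \<longleftrightarrow> wle b a \<and> wle a b \<and> pe q'' p'" using \<open>p = a # p'\<close> by simp
        show ?thesis
        proof
          assume h: "pe (b # q'') p"
          then have h2: "wle b a" "wle a b" "pe q'' p'" using pp by auto
          have "lexle wle q'' p'" using h2 bd pe_bounded[of q'' p'] by blast
          then show "lexle wle (b # q'') p \<and> \<not> lexle wle (G wle (butlast (b # q'') @ [b'])) p"
            using L R h2 nba al_ab by blast
        next
          assume h: "lexle wle (b # q'') p \<and> \<not> lexle wle (G wle (butlast (b # q'') @ [b'])) p"
          then have "wle a b" using R nba al_ab by blast
          then have h2: "wle b a" "wle a b" "lexle wle q'' p'" using h L by auto
          then have "pe q'' p'" using bd pe_bounded[of q'' p'] by blast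
          then show "pe (b # q'') p" using pp h2 by blast
        qed
      qed
    qed
  qed
qed

lemma pe_take: "pe (take m p) p"
proof (induction p arbitrary: m)
  case Nil then show ?case by simp
next
  case (Cons a p) then show ?case using wle_refl by (cases m) auto
qed

lemma pe_len: "pe q p \<Longrightarrow> length q \<le> length p"
proof (induction q arbitrary: p)
  case Nil then show ?case by simp
next
  case (Cons b q) then show ?case by (cases p) auto
qed

lemma pe_lexle: "pe q p \<Longrightarrow> lexle wle q p"
proof (induction q arbitrary: p)
  case Nil then show ?case by simp
next
  case (Cons b q) then show ?case by (cases p) auto
qed

lemma pe_eq: "pe q p \<Longrightarrow> \<forall>x\<in>set q. NF x \<Longrightarrow> \<forall>y\<in>set p. NF y \<Longrightarrow> take (length q) p = q"
proof (induction q arbitrary: p)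
  case Nil then show ?case by simp
next
  case (Cons b q)
  then obtain a p' where p: "p = a # p'" by (cases p) auto
  have "wle b a" "wle a b" "pe q p'" using Cons.prems(1) p by auto
  moreover have "NF a" "NF b" using Cons.prems p by auto
  ultimately have "a = b" using NF_unique[of a b] by simp
  moreover have "take (length q) p' = q" using Cons.IH[of p'] Cons.prems p \<open>pe q p'\<close> by simp
  ultimately show ?case using p by simp
qed

lemma W3N_NF: "A \<in> W3N \<Longrightarrow> NF A"
  by (simp add: W3N_def)

lemma char:
  assumes "A \<in> W3N" "B \<in> W3N"
  shows "Sl A B \<longleftrightarrow> (B \<noteq> [] \<and> wle B A \<and> \<not> wle (B @ [1]) A)"
proof -
  have NA: "NF A" and NB: "NF B" using assms W3N_NF by auto
  define p where "p = splitw 0 A"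
  define q where "q = splitw 0 B"
  have pp: "sdesc p \<and> (\<forall>a\<in>set p. NF a)" unfolding p_def by (rule NF_pieces[OF NA]) simp
  have pq: "sdesc q \<and> (\<forall>a\<in>set q. NF a)" unfolding q_def by (rule NF_pieces[OF NB]) simp
  have qne: "q \<noteq> []" unfolding q_def by simp
  have no0p: "\<forall>a\<in>set p. 0 \<notin> set a" unfolding p_def using splitw_notin by blast
  have no0q: "\<forall>a\<in>set q. 0 \<notin> set a" unfolding q_def using splitw_notin by blast
  have ge1p: "\<forall>a\<in>set p. \<forall>z\<in>set a. 1 \<le> z" using no0p by (metis less_one not_le)
  have ge1q: "\<forall>a\<in>set q. \<forall>z\<in>set a. 1 \<le> z" using no0q by (metis less_one not_le)
  have g1: "\<forall>z\<in>set (B @ A). 0 \<le> z" by simp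
  have g2: "\<forall>z\<in>set ((B @ [1]) @ A). 0 \<le> z" by simp
  have u1: "wle B A \<longleftrightarrow> lexle wle q p"
    using unfold_any[OF g1] G_id pp pq unfolding p_def q_def by metis
  have sB1: "splitw 0 (B @ [1]) = butlast q @ [last q @ [1]]"
    unfolding q_def by (rule splitw_snoc_other) simp
  have u2: "wle (B @ [1]) A \<longleftrightarrow> lexle wle (G wle (butlast q @ [last q @ [1]])) p"
    using unfold_any[OF g2] G_id pp sB1 unfolding p_def by metis
  have lq: "last q \<in> set q" using qne by simp
  have prp: "\<forall>c\<in>set p \<union> set q. wle (last q @ [1]) c \<longleftrightarrow> (wle (last q) c \<and> \<not> wle c (last q))"
  proof
    fix c assume c: "c \<in> set p \<union> set q"
    have "NF c" "\<forall>z\<in>set c. 1 \<le> z" using c pp pq ge1p ge1q by auto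
    moreover have "NF (last q)" "\<forall>z\<in>set (last q). 1 \<le> z" using lq pq ge1q by auto
    ultimately show "wle (last q @ [1]) c \<longleftrightarrow> (wle (last q) c \<and> \<not> wle c (last q))"
      using succ_lemma[of "last q" c 1] by simp
  qed
  have sq: "pe q p \<longleftrightarrow> wle B A \<and> \<not> wle (B @ [1]) A"
    using seq_lemma[OF _ _ qne prp] pp pq u1 u2 by simp
  have "Sl A B \<longleftrightarrow> (B \<noteq> [] \<and> pe q p)"
  proof
    assume "Sl A B"
    then obtain n m Cs where H: "A \<noteq> []" "B \<noteq> []" "1 \<le> m" "m \<le> n" "length Cs = n"
      "\<forall>C\<in>set Cs. C \<in> S 1" "A = joinw 0 Cs" "B = joinw 0 (take m Cs)"
      unfolding Sl_def by blast
    have Csne: "Cs \<noteq> []" using H by auto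
    have Cs0: "\<forall>c\<in>set Cs. 0 \<notin> set c" using H(6) unfolding S_def by fastforce
    have "p = Cs" unfolding p_def using H(7) splitw_joinw[OF Csne Cs0] by simp
    moreover have "take m Cs \<noteq> []" using H by auto
    moreover have "\<forall>c\<in>set (take m Cs). 0 \<notin> set c" using Cs0 in_set_takeD by fastforce
    ultimately have "q = take m p" unfolding q_def using H(8) splitw_joinw by simp
    then show "B \<noteq> [] \<and> pe q p" using H(2) pe_take by simp
  next
    assume h: "B \<noteq> [] \<and> pe q p"
    then have "wle B A" using sq by blast
    then have Ane: "A \<noteq> []" using wle_nonempty[OF NB] h by auto
    have tk: "take (length q) p = q" using pe_eq h pp pq by blast
    have ln: "length q \<le> length p" using pe_len h by blast
    have m1: "1 \<le> length q" using qne by (cases q) auto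
    have S1: "\<forall>C\<in>set p. C \<in> S 1" using ge1p unfolding S_def by blast
    have "A = joinw 0 p" unfolding p_def by (simp add: joinw_splitw)
    moreover have "B = joinw 0 (take (length q) p)" using tk unfolding q_def by (simp add: joinw_splitw)
    ultimately show "Sl A B" unfolding Sl_def using assms Ane h m1 ln S1 by blast
  qed
  then show ?thesis using sq by simp
qed

lemma nil_W3N: "[] \<in> W3N"
  by (simp add: W3N_def W3_def NF_empty)

theorem lemma6:
  shows "\<exists>\<phi>. \<forall>e. (\<forall>i. e i \<in> W3N) \<longrightarrow> (Sl (e 0) (e 1) \<longleftrightarrow> fsat e \<phi>)"
proof (intro exI allI impI)
  fix e :: "nat \<Rightarrow> nat list"
  assume e: "\<forall>i. e i \<in> W3N"
  define A where "A = e 0"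
  define B where "B = e 1"
  have AW: "A \<in> W3N" and BW: "B \<in> W3N" using e A_def B_def by auto
  have NB: "NF B" using BW W3N_NF by auto
  have f: "fsat e (FAnd (FEx 2 (FLess (FVar 2) (FVar 1)))
            (FAnd (FNot (FLess (FVar 0) (FVar 1))) (FLess (FVar 0) (FD1 (FVar 1)))))
      \<longleftrightarrow> (\<exists>a\<in>W3N. a \<prec> B) \<and> \<not> (A \<prec> B) \<and> A \<prec> Diamond 1 B"
    by (simp add: A_def B_def)
  have c1: "(\<exists>a\<in>W3N. a \<prec> B) \<longleftrightarrow> B \<noteq> []"
  proof
    assume "\<exists>a\<in>W3N. a \<prec> B"
    then obtain a where "a \<prec> B" by blast
    then show "B \<noteq> []" using wle_nil[of a] unfolding wless_def by auto
  next
    assume "B \<noteq> []"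
    then have "[] \<prec> B" using wle_nil[of B] wle_nonempty[OF NB] unfolding wless_def by simp
    then show "\<exists>a\<in>W3N. a \<prec> B" using nil_W3N by blast
  qed
  have c2: "\<not> (A \<prec> B) \<longleftrightarrow> wle B A" unfolding wless_def using wle_total[of A B] by blast
  have de: "wle (Diamond 1 B) (B @ [1]) \<and> wle (B @ [1]) (Diamond 1 B)" by (rule diamond_equiv[OF NB])
  have c3: "A \<prec> Diamond 1 B \<longleftrightarrow> \<not> wle (B @ [1]) A"
    unfolding wless_def using de wle_trans[of "Diamond 1 B" "B @ [1]" A] wle_trans[of "B @ [1]" "Diamond 1 B" A]
      wle_total[of A "Diamond 1 B"] by blast
  show "Sl (e 0) (e 1) \<longleftrightarrow> fsat e (FAnd (FEx 2 (FLess (FVar 2) (FVar 1)))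
            (FAnd (FNot (FLess (FVar 0) (FVar 1))) (FLess (FVar 0) (FD1 (FVar 1)))))"
    using char[OF AW BW] f c1 c2 c3 A_def B_def by simp
qed

end
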